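(* Let $q$ be a prime power, let $\mathbb{F}=\mathrm{GF}(q^2)$, and let $H\subseteq \mathbb{F}^\ast$ be the subgroup of order $q+1$. Let $G=G(q^2,q+1)$ be the simple graph whose vertex set is $(\mathbb{F}\times\mathbb{F}\setminus\{(0,0)\})/\sim$, where $(a_1,b_1)\sim(a_2,b_2)$ iff there is $h\in H$ with $a_1=ha_2$ and $b_1=hb_2$, and in which two distinct vertices $\langle a,b\rangle$ and $\langle x,y\rangle$ are adjacent iff $ax+by\in H$. If $q$ is odd then $|E(G)|=\frac{1}{2}(q^5-q^4+q^3-2q^2+1)$. If $q=2^k$ then $|E(G)|=\frac{1}{2}(q^5-q^4+q^3-2q^2)$.
   Context: $\langle a,b\rangle$ denotes the equivalence class of the pair $(a,b)$; adjacency does not depend on the representatives. Loops are not edges: a vertex $\langle x,y\rangle$ with $x^2+y^2\in H$ is not adjacent to itself. *)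

theory Defs
  imports "HOL-Computational_Algebra.Primes" "HOL-Library.Cardinality"
begin

definition scal_rel :: "'a::field set \<Rightarrow> (('a \<times> 'a) \<times> ('a \<times> 'a)) set" where
  "scal_rel H = {((a1,b1),(a2,b2)). (a1,b1) \<noteq> (0,0) \<and> (a2,b2) \<noteq> (0,0) \<and>
      (\<exists>h\<in>H. a1 = h * a2 \<and> b1 = h * b2)}"

definition G_vertices :: "'a::field set \<Rightarrow> ('a \<times> 'a) set set" where
  "G_vertices H = (UNIV - {(0,0)}) // scal_rel H"

text \<open>Adjacency of classes via representatives (independent of representatives).\<close>
definition G_adj :: "'a::field set \<Rightarrow> ('a \<times> 'a) set \<Rightarrow> ('a \<times> 'a) set \<Rightarrow> bool" where
  "G_adj H u v = (u \<noteq> v \<and> (\<exists>(a,b)\<in>u. \<exists>(x,y)\<in>v. a * x + b * y \<in> H))"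

definition G_edges :: "'a::field set \<Rightarrow> ('a \<times> 'a) set set set" where
  "G_edges H = {{u, v} | u v. u \<in> G_vertices H \<and> v \<in> G_vertices H \<and> G_adj H u v}"

end

theory Submission
  imports Defs
begin

lemma card_fibers:
  assumes "finite A"
  shows "card A = (\<Sum>y\<in>f ` A. card {x\<in>A. f x = y})"
  using sum.group[OF assms finite_imageI[OF assms] subset_refl, where g=f and h="\<lambda>_. 1::nat"] by simp

lemma invol_even:
  "finite B \<Longrightarrow> (\<forall>x\<in>B. f x \<in> B \<and> f x \<noteq> x \<and> f (f x) = x) \<Longrightarrow> even (card B)"
proof (induction "card B" arbitrary: B rule: less_induct)
  case less
  show ?case
  proof (cases "B = {}")
    case True then show ?thesis by simp
  next
    case False
    then obtain x where x: "x \<in> B" by blast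
    let ?B = "B - {x, f x}"
    have fx: "f x \<in> B" "f x \<noteq> x" using less.prems x by auto
    have sub: "{x, f x} \<subseteq> B" using fx x by simp
    have "card {x, f x} = 2" using fx by simp
    then have c: "card B = card ?B + 2"
      using card_Diff_subset[OF _ sub] card_mono[OF less.prems(1) sub] less.prems(1) by simp
    have "even (card ?B)"
    proof (rule less.hyps)
      show "card ?B < card B" using c by simp
      show "finite ?B" using less.prems by simp
      show "\<forall>y\<in>?B. f y \<in> ?B \<and> f y \<noteq> y \<and> f (f y) = y"
      proof
        fix y assume y: "y \<in> ?B"
        have P: "f y \<in> B" "f y \<noteq> y" "f (f y) = y" using y less.prems(2) by auto
        have Px: "f (f x) = x" using x less.prems(2) by auto
        have "f y \<noteq> x" using P(3) y by auto
        moreover have "f y \<noteq> f x"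
        proof
          assume "f y = f x"
          then have "f (f y) = f (f x)" by simp
          then show False using P(3) Px y by simp
        qed
        ultimately show "f y \<in> ?B \<and> f y \<noteq> y \<and> f (f y) = y" using P by auto
      qed
    qed
    then show ?thesis using c by simp
  qed
qed

lemma invol_parity:
  assumes "finite A" "\<forall>x\<in>A. f x \<in> A \<and> f (f x) = x"
  shows "even (card A) \<longleftrightarrow> even (card {x\<in>A. f x = x})"
proof -
  have e: "even (card {x\<in>A. f x \<noteq> x})"
    by (rule invol_even[of _ f]) (use assms in auto)
  have u: "A = {x\<in>A. f x = x} \<union> {x\<in>A. f x \<noteq> x}" by blast
  have "card A = card {x\<in>A. f x = x} + card {x\<in>A. f x \<noteq> x}"
    by (subst u, rule card_Un_disjoint) (use assms(1) in auto)
  then show ?thesis using e by simp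
qed

lemma char2_even:
  assumes "(1::'a::{finite,field}) + 1 = 0"
  shows "even CARD('a)"
proof -
  have "even (card (UNIV::'a set))"
  proof (rule invol_even[of _ "\<lambda>x. x + 1"])
    show "\<forall>x\<in>UNIV. x + 1 \<in> UNIV \<and> x + 1 \<noteq> x \<and> x + 1 + 1 = (x::'a)"
    proof
      fix x :: 'a
      have "x + 1 + 1 = x + (1 + 1)" by (rule add.assoc)
      also have "\<dots> = x" by (simp only: assms add_0_right)
      finally show "x + 1 \<in> UNIV \<and> x + 1 \<noteq> x \<and> x + 1 + 1 = x" by simp
    qed
  qed simp
  then show ?thesis by simp
qed

lemma charodd_odd:
  assumes "(1::'a::{finite,field}) + 1 \<noteq> 0"
  shows "odd CARD('a)"
proof -
  have "even (card (UNIV - {0::'a}))"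
  proof (rule invol_even[of _ "\<lambda>x. - x"])
    show "\<forall>x\<in>UNIV - {0::'a}. - x \<in> UNIV - {0} \<and> - x \<noteq> x \<and> - (- x) = x"
    proof
      fix x :: 'a assume "x \<in> UNIV - {0}"
      then have "x \<noteq> 0" by simp
      moreover have "- x \<noteq> x"
      proof
        assume "- x = x"
        then have "(1 + 1) * x = 0" by (simp add: distrib_right)
        with assms \<open>x \<noteq> 0\<close> show False by simp
      qed
      ultimately show "- x \<in> UNIV - {0} \<and> - x \<noteq> x \<and> - (- x) = x" by simp
    qed
  qed simp
  moreover have "card (UNIV - {0::'a}) = CARD('a) - 1" by (simp add: card_Diff_singleton)
  moreover have "CARD('a) \<ge> 1" by (simp add: Suc_leI)
  ultimately show ?thesis by (metis One_nat_def add_diff_inverse_nat even_add less_one not_le odd_one)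
qed


lemma sq_eq_iff:
  fixes x y :: "'a::field"
  shows "x * x = y * y \<longleftrightarrow> x = y \<or> x = - y"
proof -
  have "x * x - y * y = (x - y) * (x + y)" by (simp add: algebra_simps)
  then have "x * x = y * y \<longleftrightarrow> (x - y) * (x + y) = 0" by (metis eq_iff_diff_eq_0)
  also have "\<dots> \<longleftrightarrow> x = y \<or> x = - y" by (simp add: eq_neg_iff_add_eq_0)
  finally show ?thesis .
qed

lemma sqrt_m1:
  assumes two: "(1::'a::{finite,field}) + 1 \<noteq> 0" and four: "4 dvd (CARD('a) - 1)"
  shows "\<exists>i::'a. i * i = - 1"
proof (rule ccontr)
  assume nex: "\<not> (\<exists>i::'a. i * i = - 1)"
  let ?T = "UNIV - {0::'a}"
  let ?S = "(\<lambda>x. x * x) ` ?T"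
  have neg: "y \<noteq> - y" if "y \<noteq> 0" for y :: 'a
  proof
    assume "y = - y"
    then have "(1 + 1) * y = 0" by (simp add: distrib_right)
    with two that show False by simp
  qed
  have fib: "card {x\<in>?T. x * x = s} = 2" if "s \<in> ?S" for s
  proof -
    obtain y where y: "y \<noteq> 0" "s = y * y" using \<open>s \<in> ?S\<close> by auto
    have "x \<in> {x\<in>?T. x * x = s} \<longleftrightarrow> x \<in> {y, - y}" for x
      using y sq_eq_iff[of x y] by auto
    then have "{x\<in>?T. x * x = s} = {y, - y}" by blast
    then show ?thesis using neg[OF y(1)] by simp
  qed
  have "card ?T = (\<Sum>s\<in>?S. card {x\<in>?T. x * x = s})" by (rule card_fibers) simp
  also have "\<dots> = (\<Sum>s\<in>?S. 2)" by (rule sum.cong) (use fib in auto)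
  finally have cT: "card ?T = 2 * card ?S" by simp
  have "card ?T = CARD('a) - 1" by (simp add: card_Diff_singleton)
  with cT four have "4 dvd 2 * card ?S" by simp
  then have evS: "even (card ?S)" by presburger
  have clos: "\<forall>s\<in>?S. inverse s \<in> ?S \<and> inverse (inverse s) = s"
  proof
    fix s assume "s \<in> ?S"
    then obtain y where y: "y \<noteq> 0" "s = y * y" by auto
    then have "inverse s = inverse y * inverse y" by (simp add: inverse_mult_distrib)
    moreover have "inverse y \<in> ?T" using y by simp
    ultimately have "inverse s \<in> ?S" using image_eqI[of "inverse s" "\<lambda>x. x * x" "inverse y" ?T] by simp
    then show "inverse s \<in> ?S \<and> inverse (inverse s) = s" by simp
  qed
  have fix1: "{s\<in>?S. inverse s = s} = {1}"
  proof
    show "{1} \<subseteq> {s\<in>?S. inverse s = s}"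
    proof -
      have "(1::'a) = 1 * 1" by simp
      moreover have "(1::'a) \<in> ?T" by simp
      ultimately have "(1::'a) \<in> ?S" using image_eqI[of 1 "\<lambda>x. x * x" 1 ?T] by simp
      then show ?thesis by simp
    qed
    show "{s\<in>?S. inverse s = s} \<subseteq> {1}"
    proof
      fix s assume s: "s \<in> {s\<in>?S. inverse s = s}"
      then obtain y where y: "y \<noteq> 0" "s = y * y" by auto
      then have s0: "s \<noteq> 0" by simp
      have "inverse s = s" using s by simp
      then have "s * s = s * inverse s" by simp
      also have "\<dots> = 1" using s0 by simp
      finally have "s * s = 1 * 1" by simp
      then have "s = 1 \<or> s = - 1" using sq_eq_iff[of s 1] by simp
      moreover have "s \<noteq> - 1" using nex y by auto
      ultimately show "s \<in> {1}" by simp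
    qed
  qed
  have "even (card ?S) \<longleftrightarrow> even (card {s\<in>?S. inverse s = s})"
    by (rule invol_parity) (use clos in auto)
  with evS fix1 show False by simp
qed

lemma conic_char2:
  assumes two: "(1::'a::{finite,field}) + 1 = 0"
  shows "card {(a, b::'a). a * a + b * b = h} = CARD('a)"
proof -
  have sq2: "(a + b) * (a + b) = a * a + b * b" for a b :: 'a
  proof -
    have "(a + b) * (a + b) = a * a + b * b + (1 + 1) * (a * b)" by (simp add: algebra_simps)
    then show ?thesis using two by simp
  qed
  have inj: "inj (\<lambda>x::'a. x * x)"
  proof (rule injI)
    fix x y :: 'a assume "x * x = y * y"
    then have "x = y \<or> x = - y" by (simp add: sq_eq_iff)
    moreover have "- y = y"
    proof -
      have "y + y = (1 + 1) * y" by (simp add: distrib_right)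
      then have "y + y = 0" using two by simp
      then show ?thesis by (simp add: add_eq_0_iff2 eq_neg_iff_add_eq_0)
    qed
    ultimately show "x = y" by auto
  qed
  then have "surj (\<lambda>x::'a. x * x)" by (rule finite_UNIV_inj_surj[rotated]) simp
  then obtain s where s: "s * s = h" by (metis surjD)
  have "{(a, b::'a). a * a + b * b = h} = {(a, b). a + b = s}"
  proof -
    have "a * a + b * b = h \<longleftrightarrow> a + b = s" for a b
      using inj s sq2[of a b] by (metis injD)
    then show ?thesis by auto
  qed
  also have "\<dots> = (\<lambda>a. (a, s - a)) ` UNIV" by auto
  also have "card \<dots> = CARD('a)" by (rule card_image) (auto simp: inj_on_def)
  finally show ?thesis .
qed

lemma conic_odd:
  assumes two: "(1::'a::{finite,field}) + 1 \<noteq> 0" and i: "i * i = (- 1::'a)" and h: "h \<noteq> 0"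
  shows "card {(a, b::'a). a * a + b * b = h} = CARD('a) - 1"
proof -
  have two': "(2::'a) \<noteq> 0" using two by (simp add: one_add_one)
  have i0: "i \<noteq> 0" using i by auto
  define f where "f u = ((u + h / u) / 2, (u - h / u) / (2 * i))" for u
  define g where "g = (\<lambda>(a, b). a + i * b)"
  have "bij_betw f (UNIV - {0}) {(a, b::'a). a * a + b * b = h}"
  proof (rule bij_betw_byWitness[where f'=g])
    show "\<forall>u\<in>UNIV - {0}. g (f u) = u"
    proof
      fix u :: 'a assume "u \<in> UNIV - {0}"
      have "g (f u) = (u + h / u) / 2 + i * ((u - h / u) / (2 * i))" by (simp add: f_def g_def)
      also have "\<dots> = (u + h / u) / 2 + (u - h / u) / 2" using i0 by simp
      also have "\<dots> = u" using two' by (simp add: field_simps)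
      finally show "g (f u) = u" .
    qed
    show "\<forall>p\<in>{(a, b::'a). a * a + b * b = h}. f (g p) = p"
    proof
      fix p assume "p \<in> {(a, b::'a). a * a + b * b = h}"
      then obtain a b where p: "p = (a, b)" "a * a + b * b = h" by auto
      have fac: "(a + i * b) * (a - i * b) = h"
      proof -
        have "(a + i * b) * (a - i * b) = a * a - (i * i) * (b * b)" by (simp add: algebra_simps)
        then show ?thesis using i p by simp
      qed
      then have u0: "a + i * b \<noteq> 0" using h by auto
      have hu: "h / (a + i * b) = a - i * b" using fac u0 by (metis nonzero_mult_div_cancel_left)
      have "f (g p) = (((a + i * b) + (a - i * b)) / 2, ((a + i * b) - (a - i * b)) / (2 * i))"
        by (simp add: f_def g_def p hu)
      also have "\<dots> = (a, b)" using two' i0 by (simp add: field_simps)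
      finally show "f (g p) = p" using p by simp
    qed
    show "f ` (UNIV - {0}) \<subseteq> {(a, b::'a). a * a + b * b = h}"
    proof
      fix p assume "p \<in> f ` (UNIV - {0})"
      then obtain u where u: "u \<noteq> 0" "p = f u" by auto
      define w where "w = h / u"
      have uw: "u * w = h" using u by (simp add: w_def)
      have bb: "((u - w) / (2 * i)) * ((u - w) / (2 * i)) = ((u - w) * (u - w)) / (4 * (i * i))"
        by (simp add: field_simps)
      have aa: "((u + w) / 2) * ((u + w) / 2) = ((u + w) * (u + w)) / 4"
        by (simp add: field_simps)
      have four: "(4::'a) \<noteq> 0" using two' by (metis mult_2_right numeral_Bit0 mult_eq_0_iff one_add_one)
      have "((u + w) / 2) * ((u + w) / 2) + ((u - w) / (2 * i)) * ((u - w) / (2 * i))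
            = ((u + w) * (u + w) - (u - w) * (u - w)) / 4"
        unfolding aa bb i by (simp add: diff_divide_distrib)
      also have "(u + w) * (u + w) - (u - w) * (u - w) = 4 * (u * w)" by (simp add: algebra_simps)
      also have "4 * (u * w) / 4 = u * w" using four by simp
      finally have "((u + h / u) / 2) * ((u + h / u) / 2) + ((u - h / u) / (2 * i)) * ((u - h / u) / (2 * i)) = h"
        using uw by (simp add: w_def)
      then show "p \<in> {(a, b::'a). a * a + b * b = h}" using u by (simp add: f_def)
    qed
    show "g ` {(a, b::'a). a * a + b * b = h} \<subseteq> UNIV - {0}"
    proof
      fix u assume "u \<in> g ` {(a, b::'a). a * a + b * b = h}"
      then obtain a b where ab: "a * a + b * b = h" "u = a + i * b" by (auto simp: g_def)
      have "(a + i * b) * (a - i * b) = a * a - (i * i) * (b * b)" by (simp add: algebra_simps)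
      then have "(a + i * b) * (a - i * b) = h" using i ab by simp
      then show "u \<in> UNIV - {0}" using h ab by auto
    qed
  qed
  then have "card (UNIV - {0::'a}) = card {(a, b::'a). a * a + b * b = h}" by (rule bij_betw_same_card)
  then show ?thesis by (simp add: card_Diff_singleton)
qed


locale hg =
  fixes H :: "'a::{finite,field} set"
  assumes H0: "0 \<notin> H" and H1: "1 \<in> H"
    and Hm: "\<And>x y. x \<in> H \<Longrightarrow> y \<in> H \<Longrightarrow> x * y \<in> H"
    and Hi: "\<And>x. x \<in> H \<Longrightarrow> inverse x \<in> H"
begin

definition XX :: "('a \<times> 'a) set" where "XX = UNIV - {(0, 0)}"

lemma rel_iff: "(p, p') \<in> scal_rel H \<longleftrightarrow> p \<noteq> (0,0) \<and> p' \<noteq> (0,0) \<and>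
   (\<exists>h\<in>H. fst p = h * fst p' \<and> snd p = h * snd p')"
  by (cases p; cases p') (simp add: scal_rel_def)

lemma H_nz: "h \<in> H \<Longrightarrow> h \<noteq> 0" using H0 by auto

lemma equiv_r: "equiv XX (scal_rel H)"
proof (rule equivI)
  show "scal_rel H \<subseteq> XX \<times> XX" by (auto simp: XX_def scal_rel_def)
  show "refl_on XX (scal_rel H)" unfolding refl_on_def XX_def using H1 by (auto simp: rel_iff)
  show "sym (scal_rel H)"
  proof (rule symI)
    fix p p' assume "(p, p') \<in> scal_rel H"
    then obtain h where h: "h \<in> H" "fst p = h * fst p'" "snd p = h * snd p'"
      and nz: "p \<noteq> (0,0)" "p' \<noteq> (0,0)" by (auto simp: rel_iff)
    have h0: "h \<noteq> 0" using H_nz[OF h(1)] .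
    have "fst p' = inverse h * fst p" "snd p' = inverse h * snd p" using h h0 by simp_all
    then show "(p', p) \<in> scal_rel H" using Hi[OF h(1)] nz by (auto simp: rel_iff)
  qed
  show "trans (scal_rel H)"
  proof (rule transI)
    fix p p' p'' assume a: "(p, p') \<in> scal_rel H" "(p', p'') \<in> scal_rel H"
    from a(1) obtain h where h: "h \<in> H" "fst p = h * fst p'" "snd p = h * snd p'"
      and nz: "p \<noteq> (0,0)" by (auto simp: rel_iff)
    from a(2) obtain g where g: "g \<in> H" "fst p' = g * fst p''" "snd p' = g * snd p''"
      and nz2: "p'' \<noteq> (0,0)" by (auto simp: rel_iff)
    have "fst p = (h * g) * fst p''" "snd p = (h * g) * snd p''" using h g by (simp_all add: mult.assoc)
    then show "(p, p'') \<in> scal_rel H" using Hm[OF h(1) g(1)] nz nz2 by (auto simp: rel_iff)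
  qed
qed

lemma class_eq:
  assumes p: "p \<noteq> (0,0)"
  shows "scal_rel H `` {p} = (\<lambda>g. (g * fst p, g * snd p)) ` H"
proof (intro equalityI subsetI)
  fix p' assume "p' \<in> scal_rel H `` {p}"
  then have "(p, p') \<in> scal_rel H" by simp
  then obtain h where h: "h \<in> H" "fst p = h * fst p'" "snd p = h * snd p'" by (auto simp: rel_iff)
  have h0: "h \<noteq> 0" using H_nz[OF h(1)] .
  have "p' = (inverse h * fst p, inverse h * snd p)" using h h0 by (cases p') simp
  then show "p' \<in> (\<lambda>g. (g * fst p, g * snd p)) ` H" using Hi[OF h(1)] by blast
next
  fix p' assume "p' \<in> (\<lambda>g. (g * fst p, g * snd p)) ` H"
  then obtain g where g: "g \<in> H" "p' = (g * fst p, g * snd p)" by auto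
  have g0: "g \<noteq> 0" using H_nz[OF g(1)] .
  have nz: "p' \<noteq> (0,0)" using g g0 p by (cases p) auto
  have "fst p = inverse g * fst p'" "snd p = inverse g * snd p'" using g g0 by simp_all
  then have "(p, p') \<in> scal_rel H" using Hi[OF g(1)] nz p by (auto simp: rel_iff)
  then show "p' \<in> scal_rel H `` {p}" by simp
qed

lemma card_class:
  assumes p: "p \<noteq> (0,0)"
  shows "card (scal_rel H `` {p}) = card H"
proof -
  have "inj_on (\<lambda>g. (g * fst p, g * snd p)) H"
  proof (rule inj_onI)
    fix g g' assume "(g * fst p, g * snd p) = (g' * fst p, g' * snd p)"
    then have e: "g * fst p = g' * fst p" "g * snd p = g' * snd p" by auto
    show "g = g'"
    proof (cases "fst p = 0")
      case True
      then have "snd p \<noteq> 0" using p by (cases p) auto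
      then show ?thesis using e(2) by simp
    next
      case False
      then show ?thesis using e(1) by simp
    qed
  qed
  then show ?thesis unfolding class_eq[OF p] by (rule card_image)
qed

lemma card_sat:
  assumes A: "A \<subseteq> XX" and sat: "\<And>p p'. p \<in> A \<Longrightarrow> (p, p') \<in> scal_rel H \<Longrightarrow> p' \<in> A"
  shows "card A = card H * card (A // scal_rel H)"
proof -
  have U: "\<Union>(A // scal_rel H) = A"
  proof
    show "\<Union>(A // scal_rel H) \<subseteq> A" using sat by (auto simp: quotient_def)
    show "A \<subseteq> \<Union>(A // scal_rel H)"
    proof
      fix x assume x: "x \<in> A"
      then have "x \<in> scal_rel H `` {x}" using equiv_r A by (auto simp: equiv_def refl_on_def)
      then show "x \<in> \<Union>(A // scal_rel H)" using x by (auto simp: quotient_def)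
    qed
  qed
  have sub: "A // scal_rel H \<subseteq> XX // scal_rel H" using A by (auto simp: quotient_def)
  have disj: "pairwise disjnt (A // scal_rel H)"
    unfolding pairwise_def disjnt_def using quotient_disj[OF equiv_r] sub by blast
  have "card A = card (\<Union>(A // scal_rel H))" using U by simp
  also have "\<dots> = sum card (A // scal_rel H)" by (rule card_Union_disjoint[OF disj]) simp
  also have "\<dots> = sum (\<lambda>_. card H) (A // scal_rel H)"
  proof (rule sum.cong)
    fix C assume "C \<in> A // scal_rel H"
    then obtain x where x: "x \<in> A" "C = scal_rel H `` {x}" by (auto simp: quotient_def)
    have "x \<noteq> (0,0)" using x A by (auto simp: XX_def)
    then show "card C = card H" using x card_class by simp
  qed simp
  finally show ?thesis by simp
qed

definition adj0 :: "('a \<times> 'a) set \<Rightarrow> ('a \<times> 'a) set \<Rightarrow> bool" where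
  "adj0 u v = (\<exists>(a,b)\<in>u. \<exists>(x,y)\<in>v. a * x + b * y \<in> H)"

lemma G_adj_eq: "G_adj H u v \<longleftrightarrow> u \<noteq> v \<and> adj0 u v"
  by (simp add: G_adj_def adj0_def)

lemma adj0_class:
  assumes p: "p \<noteq> (0,0)" and p': "p' \<noteq> (0,0)"
  shows "adj0 (scal_rel H `` {p}) (scal_rel H `` {p'}) \<longleftrightarrow> fst p * fst p' + snd p * snd p' \<in> H"
proof
  assume "fst p * fst p' + snd p * snd p' \<in> H"
  moreover have "p \<in> scal_rel H `` {p}" "p' \<in> scal_rel H `` {p'}"
    using class_eq[OF p] class_eq[OF p'] H1 by (auto intro: image_eqI[of _ _ 1])
  ultimately show "adj0 (scal_rel H `` {p}) (scal_rel H `` {p'})"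
    unfolding adj0_def by (cases p; cases p') fastforce
next
  assume "adj0 (scal_rel H `` {p}) (scal_rel H `` {p'})"
  then obtain g g' where g: "g \<in> H" "g' \<in> H"
    and s: "(g * fst p) * (g' * fst p') + (g * snd p) * (g' * snd p') \<in> H"
    unfolding adj0_def class_eq[OF p] class_eq[OF p'] by auto
  have e: "(g * fst p) * (g' * fst p') + (g * snd p) * (g' * snd p')
        = (g * g') * (fst p * fst p' + snd p * snd p')" by (simp add: algebra_simps)
  have gg: "g * g' \<in> H" "g * g' \<noteq> 0" using Hm[OF g] H_nz[OF Hm[OF g]] by auto
  have "inverse (g * g') * ((g * g') * (fst p * fst p' + snd p * snd p')) \<in> H"
    using Hm[OF Hi[OF gg(1)]] s e by metis
  moreover have "inverse (g * g') * ((g * g') * (fst p * fst p' + snd p * snd p')) = fst p * fst p' + snd p * snd p'"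
  proof -
    have "inverse (g * g') * (g * g') = 1" using gg(2) by (rule left_inverse)
    then show ?thesis by (metis mult.assoc mult_1_left)
  qed
  ultimately show "fst p * fst p' + snd p * snd p' \<in> H" by metis
qed

lemma card_line:
  fixes a b :: 'a
  assumes "(a, b) \<noteq> (0, 0)"
  shows "card {p. fst p * a + snd p * b = h} = CARD('a)"
proof (cases "a = 0")
  case True
  then have b: "b \<noteq> 0" using assms by simp
  have "{p. fst p * a + snd p * b = h} = (\<lambda>x. (x, h / b)) ` UNIV"
    using True b by (auto simp: field_simps)
  also have "card \<dots> = CARD('a)" by (rule card_image) (auto simp: inj_on_def)
  finally show ?thesis .
next
  case False
  have "{p. fst p * a + snd p * b = h} = (\<lambda>y. ((h - y * b) / a, y)) ` UNIV"
  proof (intro equalityI subsetI)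
    fix p :: "'a \<times> 'a" assume "p \<in> {p. fst p * a + snd p * b = h}"
    then have "fst p = (h - snd p * b) / a" using False by (simp add: field_simps)
    then show "p \<in> (\<lambda>y. ((h - y * b) / a, y)) ` UNIV" by (intro image_eqI[of _ _ "snd p"]) (cases p, auto)
  next
    fix p :: "'a \<times> 'a" assume "p \<in> (\<lambda>y. ((h - y * b) / a, y)) ` UNIV"
    then show "p \<in> {p. fst p * a + snd p * b = h}" using False by auto
  qed
  also have "card \<dots> = CARD('a)" by (rule card_image) (auto simp: inj_on_def)
  finally show ?thesis .
qed

end


lemma handshake:
  assumes fin: "finite V" and sym: "\<And>u v. R u v \<Longrightarrow> R v u" and irr: "\<And>u. \<not> R u u"
  shows "card (Sigma V (\<lambda>v. {u\<in>V. R u v})) = 2 * card {{u, v} | u v. u \<in> V \<and> v \<in> V \<and> R u v}"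
proof -
  let ?D = "Sigma V (\<lambda>v. {u\<in>V. R u v})"
  let ?f = "\<lambda>(v, u). {u, v}"
  have finD: "finite ?D" using fin by simp
  have img: "?f ` ?D = {{u, v} | u v. u \<in> V \<and> v \<in> V \<and> R u v}"
  proof (intro equalityI subsetI)
    fix e assume "e \<in> ?f ` ?D"
    then show "e \<in> {{u, v} | u v. u \<in> V \<and> v \<in> V \<and> R u v}" by auto
  next
    fix e assume "e \<in> {{u, v} | u v. u \<in> V \<and> v \<in> V \<and> R u v}"
    then obtain u v where e: "e = {u, v}" "u \<in> V" "v \<in> V" "R u v" by blast
    then have "(v, u) \<in> ?D" by simp
    then show "e \<in> ?f ` ?D" using e by (intro image_eqI[of _ _ "(v, u)"]) auto
  qed
  have fib: "card {x\<in>?D. ?f x = e} = 2" if "e \<in> ?f ` ?D" for e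
  proof -
    from that obtain x where x: "x \<in> ?D" "e = ?f x" by blast
    obtain v u where xvu: "x = (v, u)" by (cases x)
    have vu: "(v, u) \<in> ?D" "e = {u, v}" using x xvu by auto
    have R: "R u v" "u \<in> V" "v \<in> V" using vu by auto
    have neq: "u \<noteq> v" using R(1) irr by metis
    have "{x\<in>?D. ?f x = e} = {(v, u), (u, v)}"
    proof (intro equalityI subsetI)
      fix x assume x: "x \<in> {x\<in>?D. ?f x = e}"
      obtain v' u' where xe: "x = (v', u')" by (cases x)
      have "{u', v'} = {u, v}" using x xe vu by simp
      then show "x \<in> {(v, u), (u, v)}" using xe by (auto simp: doubleton_eq_iff)
    next
      fix x assume "x \<in> {(v, u), (u, v)}"
      then show "x \<in> {x\<in>?D. ?f x = e}" using R sym vu by auto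
    qed
    then show ?thesis using neq by simp
  qed
  have "card ?D = (\<Sum>e\<in>?f ` ?D. card {x\<in>?D. ?f x = e})" by (rule card_fibers[OF finD])
  also have "\<dots> = (\<Sum>e\<in>?f ` ?D. 2)" by (rule sum.cong) (use fib in auto)
  also have "\<dots> = 2 * card (?f ` ?D)" by simp
  finally show ?thesis using img by simp
qed

context hg
begin

lemma card_XX: "card XX = CARD('a) * CARD('a) - 1"
proof -
  have "card XX = CARD('a \<times> 'a) - 1" unfolding XX_def by (simp add: card_Diff_singleton)
  then show ?thesis by (simp add: card_prod)
qed

lemma card_V: "card XX = card H * card (G_vertices H)"
  unfolding G_vertices_def XX_def[symmetric]
  by (rule card_sat) (use equiv_r in \<open>auto simp: equiv_def\<close>)

lemma cardH_pos: "card H > 0"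
  using H1 by (auto simp: card_gt_0_iff)

lemma quot_filter:
  assumes N: "N = {p\<in>XX. P p}"
    and P: "\<And>p. p \<in> XX \<Longrightarrow> Q (scal_rel H `` {p}) \<longleftrightarrow> P p"
  shows "{u \<in> G_vertices H. Q u} = N // scal_rel H"
proof (intro equalityI subsetI)
  fix u assume u: "u \<in> {u \<in> G_vertices H. Q u}"
  then obtain p where p: "p \<in> XX" "u = scal_rel H `` {p}"
    by (auto simp: G_vertices_def XX_def quotient_def)
  then have "p \<in> N" using u P N by auto
  then show "u \<in> N // scal_rel H" using p by (auto simp: quotient_def)
next
  fix u assume "u \<in> N // scal_rel H"
  then obtain p where p: "p \<in> N" "u = scal_rel H `` {p}" by (auto simp: quotient_def)
  then have "p \<in> XX" "P p" using N by auto
  then show "u \<in> {u \<in> G_vertices H. Q u}" using p P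
    by (auto simp: G_vertices_def XX_def[symmetric] quotient_def)
qed

lemma quot_sat:
  assumes N: "N = {p\<in>XX. P p}"
    and P: "\<And>p. p \<in> XX \<Longrightarrow> Q (scal_rel H `` {p}) \<longleftrightarrow> P p"
  shows "card N = card H * card {u \<in> G_vertices H. Q u}"
proof -
  have "card N = card H * card (N // scal_rel H)"
  proof (rule card_sat)
    show "N \<subseteq> XX" using N by auto
    fix p p' assume p: "p \<in> N" and pp: "(p, p') \<in> scal_rel H"
    have p': "p' \<in> XX" using pp equiv_r by (auto simp: equiv_def)
    have "scal_rel H `` {p} = scal_rel H `` {p'}" using equiv_class_eq[OF equiv_r pp] .
    then show "p' \<in> N" using P[of p] P[OF p'] p p' N by auto
  qed
  then show ?thesis using quot_filter[OF N P] by simp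
qed

lemma nbr:
  assumes p: "p \<in> XX"
  shows "card {u \<in> G_vertices H. adj0 u (scal_rel H `` {p})} = CARD('a)"
proof -
  let ?N = "{p'. fst p' * fst p + snd p' * snd p \<in> H}"
  have p0: "p \<noteq> (0,0)" using p by (simp add: XX_def)
  have N: "?N = {p'\<in>XX. fst p' * fst p + snd p' * snd p \<in> H}" using H0 by (auto simp: XX_def)
  have c1: "card ?N = card H * card {u \<in> G_vertices H. adj0 u (scal_rel H `` {p})}"
  proof (rule quot_sat[OF N])
    fix p' assume "p' \<in> XX"
    then have "p' \<noteq> (0,0)" by (simp add: XX_def)
    then show "adj0 (scal_rel H `` {p'}) (scal_rel H `` {p}) \<longleftrightarrow> fst p' * fst p + snd p' * snd p \<in> H"
      using adj0_class p0 by simp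
  qed
  have e: "?N = (\<Union>h\<in>H. {p'. fst p' * fst p + snd p' * snd p = h})" by auto
  have "card (\<Union>h\<in>H. {p'. fst p' * fst p + snd p' * snd p = h}) = (\<Sum>h\<in>H. card {p'. fst p' * fst p + snd p' * snd p = h})"
    by (rule card_UN_disjoint) auto
  then have "card ?N = (\<Sum>h\<in>H. card {p'. fst p' * fst p + snd p' * snd p = h})"
    using e by simp
  also have "\<dots> = (\<Sum>h\<in>H. CARD('a))"
  proof -
    have pp: "(fst p, snd p) \<noteq> (0,0)" using p0 by simp
    show ?thesis by (rule sum.cong[OF refl], rule card_line[OF pp])
  qed
  finally have "card ?N = card H * CARD('a)" by simp
  then have "card H * card {u \<in> G_vertices H. adj0 u (scal_rel H `` {p})} = card H * CARD('a)"
    by (rule trans[OF c1[symmetric]])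
  moreover have "card H \<noteq> 0" using cardH_pos by (rule gr_implies_not0)
  ultimately show ?thesis using mult_left_cancel[of "card H"] by blast
qed

lemma sym_G_adj: "G_adj H u v \<Longrightarrow> G_adj H v u"
  unfolding G_adj_def by (fastforce simp: mult.commute)

lemma deg:
  assumes p: "p \<in> XX"
  shows "card {u \<in> G_vertices H. G_adj H u (scal_rel H `` {p})}
       = CARD('a) - (if adj0 (scal_rel H `` {p}) (scal_rel H `` {p}) then 1 else 0)"
proof -
  let ?v = "scal_rel H `` {p}"
  have vV: "?v \<in> G_vertices H" using p by (auto simp: G_vertices_def XX_def quotient_def)
  have "{u \<in> G_vertices H. G_adj H u ?v} = {u \<in> G_vertices H. adj0 u ?v} - {?v}"
    by (auto simp: G_adj_eq)
  then show ?thesis using nbr[OF p] vV by (simp add: card_Diff_singleton_if)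
qed

lemma two_E:
  "int (2 * card (G_edges H)) = int (card (G_vertices H)) * int CARD('a)
      - int (card {v \<in> G_vertices H. adj0 v v})"
proof -
  have finV: "finite (G_vertices H)" by simp
  have "2 * card (G_edges H) = card (Sigma (G_vertices H) (\<lambda>v. {u\<in>G_vertices H. G_adj H u v}))"
  proof -
    have irr: "\<not> G_adj H u u" for u by (simp add: G_adj_def)
    show ?thesis unfolding G_edges_def by (rule handshake[symmetric, OF finV sym_G_adj irr])
  qed
  also have "\<dots> = (\<Sum>v\<in>G_vertices H. card {u\<in>G_vertices H. G_adj H u v})"
    by (rule card_SigmaI) auto
  finally have "int (2 * card (G_edges H)) = (\<Sum>v\<in>G_vertices H. int (card {u\<in>G_vertices H. G_adj H u v}))"
    by simp
  also have "\<dots> = (\<Sum>v\<in>G_vertices H. int CARD('a) - (if adj0 v v then 1 else 0))"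
  proof (rule sum.cong)
    fix v assume "v \<in> G_vertices H"
    then obtain p where p: "p \<in> XX" "v = scal_rel H `` {p}"
      by (auto simp: G_vertices_def XX_def quotient_def)
    have c1: "CARD('a) \<ge> 1" by (simp add: Suc_leI)
    have d: "card {u\<in>G_vertices H. G_adj H u v} = CARD('a) - (if adj0 v v then 1 else 0)"
      using deg[OF p(1)] p(2) by simp
    show "int (card {u\<in>G_vertices H. G_adj H u v}) = int CARD('a) - (if adj0 v v then 1 else 0)"
    proof (cases "adj0 v v")
      case True then show ?thesis using d c1 by (simp add: of_nat_diff)
    next
      case False then show ?thesis using d by simp
    qed
  qed simp
  also have "\<dots> = int (card (G_vertices H)) * int CARD('a) - (\<Sum>v\<in>G_vertices H. if adj0 v v then 1 else 0)"
    by (simp add: sum_subtractf)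
  also have "(\<Sum>v\<in>G_vertices H. if adj0 v v then 1 else (0::int)) = int (card {v \<in> G_vertices H. adj0 v v})"
    by (simp add: sum.If_cases Int_def)
  finally show ?thesis .
qed

lemma loops:
  "card H * card {v \<in> G_vertices H. adj0 v v} = (\<Sum>h\<in>H. card {(a, b). a * a + b * b = h})"
proof -
  let ?S = "{p. fst p * fst p + snd p * snd p \<in> H}"
  have N: "?S = {p\<in>XX. fst p * fst p + snd p * snd p \<in> H}" using H0 by (auto simp: XX_def)
  have c1: "card ?S = card H * card {v \<in> G_vertices H. adj0 v v}"
  proof (rule quot_sat[OF N])
    fix p assume "p \<in> XX"
    then have "p \<noteq> (0,0)" by (simp add: XX_def)
    then show "adj0 (scal_rel H `` {p}) (scal_rel H `` {p}) \<longleftrightarrow> fst p * fst p + snd p * snd p \<in> H"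
      using adj0_class by simp
  qed
  have e: "?S = (\<Union>h\<in>H. {(a, b). a * a + b * b = h})" by auto
  have "card (\<Union>h\<in>H. {(a, b). a * a + b * b = h}) = (\<Sum>h\<in>H. card {(a, b). a * a + b * b = h})"
    by (rule card_UN_disjoint) auto
  then have "card ?S = (\<Sum>h\<in>H. card {(a, b). a * a + b * b = h})"
    using e by simp
  with c1 show ?thesis by simp
qed

end


theorem theorem4:
  fixes q :: nat and H :: "'a::{finite,field} set"
  assumes q_pp: "\<exists>p k. prime p \<and> k \<ge> 1 \<and> q = p ^ k"
    and card_F: "CARD('a) = q ^ 2"
    and H_sub: "H \<subseteq> UNIV - {0}"
    and H_one: "1 \<in> H"
    and H_mult: "\<And>x y. x \<in> H \<Longrightarrow> y \<in> H \<Longrightarrow> x * y \<in> H"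
    and H_inv: "\<And>x. x \<in> H \<Longrightarrow> inverse x \<in> H"
    and H_card: "card H = q + 1"
  shows "(odd q \<longrightarrow> 2 * int (card (G_edges H)) = int q ^ 5 - int q ^ 4 + int q ^ 3 - 2 * int q ^ 2 + 1)
       \<and> (\<forall>k. q = 2 ^ k \<longrightarrow> 2 * int (card (G_edges H)) = int q ^ 5 - int q ^ 4 + int q ^ 3 - 2 * int q ^ 2)"
proof -
  have H0: "0 \<notin> H" using H_sub by auto
  interpret hg H using H0 H_one H_mult H_inv by unfold_locales auto
  obtain p k0 where pk: "prime p" "k0 \<ge> 1" "q = p ^ k0" using q_pp by blast
  have q2: "q \<ge> 2"
  proof -
    have "p \<ge> 2" using pk(1) by (rule prime_ge_2_nat)
    moreover have "p \<le> p ^ k0" using pk(2) \<open>p \<ge> 2\<close> by (simp add: self_le_power)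
    ultimately show ?thesis using pk(3) by simp
  qed
  define cV where "cV = card (G_vertices H)"
  define cL where "cL = card {v \<in> G_vertices H. adj0 v v}"
  define E where "E = card (G_edges H)"
  have hE: "2 * int E = int cV * int q ^ 2 - int cL"
    using two_E card_F unfolding cV_def cL_def E_def by simp
  have hV: "(int q + 1) * int cV = int q ^ 4 - 1"
  proof -
    have "card XX = CARD('a) * CARD('a) - 1" by (rule card_XX)
    then have "int (card XX) = int q ^ 4 - 1"
      using card_F q2 by (simp add: of_nat_diff power_mult_distrib flip: power_add)
    moreover have "card XX = (q + 1) * cV" using card_V H_card unfolding cV_def by simp
    ultimately show ?thesis by (simp add: algebra_simps)
  qed
  have cVeq: "int cV = (int q - 1) * (int q ^ 2 + 1)"
  proof -
    have "(int q + 1) * int cV = (int q + 1) * ((int q - 1) * (int q ^ 2 + 1))"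
      using hV by (simp add: algebra_simps power2_eq_square power4_eq_xxxx)
    moreover have "int q + 1 \<noteq> 0" by simp
    ultimately show ?thesis by simp
  qed
  have hL: "(q + 1) * cL = (\<Sum>h\<in>H. card {(a, b). a * a + b * b = h})"
    using loops H_card unfolding cL_def by simp
  have cL_of: "cL = m" if "(\<Sum>h\<in>H. card {(a, b). a * a + b * b = h}) = (q + 1) * m" for m
  proof -
    have "(q + 1) * cL = (q + 1) * m" using hL that by simp
    then show ?thesis using mult_left_cancel[of "q + 1" cL m] by simp
  qed
  show ?thesis
  proof (intro conjI impI allI)
    assume oq: "odd q"
    have two: "(1::'a) + 1 \<noteq> 0"
    proof
      assume "(1::'a) + 1 = 0"
      then have "even CARD('a)" by (rule char2_even)
      then show False using oq card_F by simp
    qed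
    have four: "4 dvd (CARD('a) - 1)"
    proof -
      obtain m where m: "q = 2 * m + 1" using oq oddE by blast
      have "CARD('a) - 1 = 4 * (m * m + m)" using card_F m by (simp add: power2_eq_square algebra_simps)
      then show ?thesis by simp
    qed
    obtain i :: 'a where i: "i * i = - 1" using sqrt_m1[OF two four] by blast
    have "(\<Sum>h\<in>H. card {(a, b). a * a + b * b = h}) = (\<Sum>h\<in>H. CARD('a) - 1)"
    proof (rule sum.cong[OF refl])
      fix h assume "h \<in> H"
      then have "h \<noteq> 0" using H0 by auto
      then show "card {(a, b). a * a + b * b = h} = CARD('a) - 1" by (rule conic_odd[OF two i])
    qed
    also have "\<dots> = (q + 1) * (q ^ 2 - 1)" using H_card card_F by simp
    finally have "cL = q ^ 2 - 1" by (rule cL_of)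
    then have "int cL = int q ^ 2 - 1" using q2 by (simp add: of_nat_diff)
    then show "2 * int (card (G_edges H)) = int q ^ 5 - int q ^ 4 + int q ^ 3 - 2 * int q ^ 2 + 1"
      using hE cVeq unfolding E_def by (simp add: algebra_simps power2_eq_square power3_eq_cube
         power4_eq_xxxx numeral_eq_Suc)
  next
    fix k assume qk: "q = 2 ^ k"
    have "k \<noteq> 0" using qk q2 by (cases k) auto
    then have eq: "even q" using qk by simp
    have two: "(1::'a) + 1 = 0"
    proof (rule ccontr)
      assume "(1::'a) + 1 \<noteq> 0"
      then have "odd CARD('a)" by (rule charodd_odd)
      then show False using eq card_F by simp
    qed
    have "(\<Sum>h\<in>H. card {(a, b). a * a + b * b = h}) = (\<Sum>h\<in>H. CARD('a))"
      by (rule sum.cong[OF refl], rule conic_char2[OF two])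
    also have "\<dots> = (q + 1) * q ^ 2" using H_card card_F by simp
    finally have "cL = q ^ 2" by (rule cL_of)
    then show "2 * int (card (G_edges H)) = int q ^ 5 - int q ^ 4 + int q ^ 3 - 2 * int q ^ 2"
      using hE cVeq unfolding E_def by (simp add: algebra_simps power2_eq_square power3_eq_cube
         power4_eq_xxxx numeral_eq_Suc)
  qed
qed

end
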